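(* Let $\{X_n\}_{n\ge1}$ be a sequence of independent random variables and $X$ an integrable random variable with $\mathrm{E}X<\infty$. If for all $n\ge1$ and all $s\in\overline{\mathbb{R}}$ $$\mathcal{P}\{X_n\ge s\mid X_1,\dots,X_{n-1}\}\le\mathcal{P}\{X>s\},$$ then $\limsup_{n\to\infty}\frac1n\sum_{i=1}^n X_i\le\mathrm{E}X$ almost surely. *)

theory Defs
  imports "HOL-Probability.Probability"
begin

definition gen_sigma :: "'a measure \<Rightarrow> (nat \<Rightarrow> 'a \<Rightarrow> real) \<Rightarrow> nat set \<Rightarrow> 'a measure" where
  "gen_sigma M Xs I =
     sigma (space M) (\<Union>i\<in>I. sets (vimage_algebra (space M) (Xs i) borel))"

definition cond_prob :: "'a measure \<Rightarrow> 'a measure \<Rightarrow> 'a set \<Rightarrow> 'a \<Rightarrow> real" where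
  "cond_prob M F A = real_cond_exp M F (indicator A)"

text \<open>Expectation of a real random variable in the extended reals,
  E X = E X^+ - E X^-, well defined whenever E X^+ < \<infinity>.\<close>
definition ext_expectation :: "'b measure \<Rightarrow> ('b \<Rightarrow> real) \<Rightarrow> ereal" where
  "ext_expectation N X =
     enn2ereal (\<integral>\<^sup>+ x. ennreal (max 0 (X x)) \<partial>N)
     - enn2ereal (\<integral>\<^sup>+ x. ennreal (max 0 (- X x)) \<partial>N)"

end

theory Submission
  imports Defs
begin


lemma layer_nn:
  fixes Y :: "'a \<Rightarrow> real" and h :: "real \<Rightarrow> ennreal"
  assumes "sigma_finite_measure M" and [measurable]: "Y \<in> borel_measurable M" "h \<in> borel_measurable borel"
  shows "(\<integral>\<^sup>+\<omega>. (\<integral>\<^sup>+t. h t * indicator {0<..Y \<omega>} t \<partial>lborel) \<partial>M)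
       = (\<integral>\<^sup>+t. h t * indicator {0<..} t * emeasure M {\<omega>\<in>space M. t \<le> Y \<omega>} \<partial>lborel)"
proof -
  interpret pair_sigma_finite lborel M
    using assms(1) by (simp add: pair_sigma_finite_def lborel.sigma_finite_measure_axioms)
  have m: "(\<lambda>(t,\<omega>). (if 0 < t \<and> t \<le> Y \<omega> then h t else 0)) \<in> borel_measurable (lborel \<Otimes>\<^sub>M M)"
    by measurable
  have "(\<integral>\<^sup>+\<omega>. (\<integral>\<^sup>+t. h t * indicator {0<..Y \<omega>} t \<partial>lborel) \<partial>M)
      = (\<integral>\<^sup>+\<omega>. (\<integral>\<^sup>+t. (if 0 < t \<and> t \<le> Y \<omega> then h t else 0) \<partial>lborel) \<partial>M)"
    by (intro nn_integral_cong) (auto simp: indicator_def)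
  also have "\<dots> = (\<integral>\<^sup>+t. (\<integral>\<^sup>+\<omega>. (if 0 < t \<and> t \<le> Y \<omega> then h t else 0) \<partial>M) \<partial>lborel)"
    using Fubini'[OF m] by simp
  also have "\<dots> = (\<integral>\<^sup>+t. h t * indicator {0<..} t * emeasure M {\<omega>\<in>space M. t \<le> Y \<omega>} \<partial>lborel)"
  proof (intro nn_integral_cong)
    fix t :: real
    have "(\<integral>\<^sup>+\<omega>. (if 0 < t \<and> t \<le> Y \<omega> then h t else 0) \<partial>M)
        = (\<integral>\<^sup>+\<omega>. (h t * indicator {0<..} t) * indicator {\<omega>\<in>space M. t \<le> Y \<omega>} \<omega> \<partial>M)"
      by (intro nn_integral_cong) (auto simp: indicator_def)
    also have "\<dots> = h t * indicator {0<..} t * emeasure M {\<omega>\<in>space M. t \<le> Y \<omega>}"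
      by (subst nn_integral_cmult_indicator) auto
    finally show "(\<integral>\<^sup>+\<omega>. (if 0 < t \<and> t \<le> Y \<omega> then h t else 0) \<partial>M) = h t * indicator {0<..} t * emeasure M {\<omega>\<in>space M. t \<le> Y \<omega>}" .
  qed
  finally show ?thesis .
qed

lemma layer_mono:
  fixes Y :: "'a \<Rightarrow> real" and Z :: "'b \<Rightarrow> real" and h :: "real \<Rightarrow> ennreal"
  assumes "sigma_finite_measure M" "sigma_finite_measure N"
    and [measurable]: "Y \<in> borel_measurable M" "Z \<in> borel_measurable N" "h \<in> borel_measurable borel"
    and dom: "\<And>t. t > 0 \<Longrightarrow> emeasure M {\<omega>\<in>space M. t \<le> Y \<omega>} \<le> emeasure N {x\<in>space N. t \<le> Z x}"
  shows "(\<integral>\<^sup>+\<omega>. (\<integral>\<^sup>+t. h t * indicator {0<..Y \<omega>} t \<partial>lborel) \<partial>M)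
       \<le> (\<integral>\<^sup>+x. (\<integral>\<^sup>+t. h t * indicator {0<..Z x} t \<partial>lborel) \<partial>N)"
  unfolding layer_nn[OF assms(1,3,5)] layer_nn[OF assms(2,4,5)]
  by (intro nn_integral_mono) (auto simp: indicator_def intro!: mult_left_mono dom)

lemma G1:
  fixes a y :: real assumes "0 \<le> a" "0 \<le> y"
  shows "(\<integral>\<^sup>+t. indicator {..a} t * indicator {0<..y} t \<partial>lborel) = ennreal (min y a)"
proof -
  have "(\<integral>\<^sup>+t. indicator {..a} t * indicator {0<..y} t \<partial>lborel) = (\<integral>\<^sup>+t. indicator {0<..min y a} t \<partial>lborel)"
    by (intro nn_integral_cong) (auto simp: indicator_def)
  also have "\<dots> = ennreal (min y a)" using assms by simp
  finally show ?thesis .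
qed

lemma G2:
  fixes a y :: real assumes "0 \<le> a" "0 \<le> y"
  shows "(\<integral>\<^sup>+t. (ennreal (2*t) * indicator {..a} t) * indicator {0<..y} t \<partial>lborel) = ennreal ((min y a)^2)"
proof -
  have "(\<integral>\<^sup>+t. (ennreal (2*t) * indicator {..a} t) * indicator {0<..y} t \<partial>lborel)
      = (\<integral>\<^sup>+t. ennreal (2*t) * indicator {0..min y a} t \<partial>lborel)"
    by (intro nn_integral_cong) (auto simp: indicator_def)
  also have "\<dots> = ennreal ((min y a)^2 - 0^2)"
    using assms by (intro nn_integral_FTC_Icc) (auto intro!: derivative_eq_intros)
  finally show ?thesis by simp
qed




lemma geo_up:
  fixes a :: real assumes "a > 1" "finite S" "\<And>m. m \<in> S \<Longrightarrow> a^m \<le> z" "z \<ge> 0"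
  shows "(\<Sum>m\<in>S. a^m) \<le> a * z / (a - 1)"
proof (cases "S = {}")
  case True
  then show ?thesis using assms by (simp add: mult_nonneg_nonneg)
next
  case False
  define K where "K = Max S"
  have KS: "K \<in> S" using False assms(2) by (simp add: K_def)
  have sub: "S \<subseteq> {..K}" using assms(2) by (auto simp: K_def)
  have "(\<Sum>m\<in>S. a^m) \<le> (\<Sum>m\<in>{..K}. a^m)"
    using sub assms(1) by (intro sum_mono2) auto
  also have "\<dots> = (\<Sum>m<Suc K. a^m)" by (simp add: lessThan_Suc_atMost)
  also have "\<dots> = (a^Suc K - 1) / (a - 1)"
    using assms(1) by (intro geometric_sum) auto
  also have "\<dots> \<le> a^Suc K / (a - 1)"
    using assms(1) by (simp add: divide_right_mono)
  also have "\<dots> \<le> a * z / (a - 1)"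
    using assms(1) assms(3)[OF KS] by (intro divide_right_mono) auto
  finally show ?thesis .
qed

lemma geo_down:
  fixes a :: real assumes "a > 1" "finite S" "\<And>m. m \<in> S \<Longrightarrow> a^m > z" "z \<ge> 0"
  shows "(\<Sum>m\<in>S. z^2 / a^m) \<le> a * z / (a - 1)"
proof (cases "S = {}")
  case True
  then show ?thesis using assms by (simp add: mult_nonneg_nonneg)
next
  case False
  define K where "K = Min S"
  define n where "n = Suc (Max S)"
  have KS: "K \<in> S" using False assms(2) by (simp add: K_def)
  have sub: "S \<subseteq> {K..<n}" using assms(2) by (auto simp: K_def n_def less_Suc_eq_le)
  have Kn: "K \<le> n" using sub KS by auto
  have "(\<Sum>m\<in>S. z^2 / a^m) = (\<Sum>m\<in>S. z^2 * (1/a)^m)"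
    by (simp add: power_one_over)
  also have "\<dots> \<le> (\<Sum>m\<in>{K..<n}. z^2 * (1/a)^m)"
    using sub assms(1) by (intro sum_mono2) auto
  also have "\<dots> = z^2 * (\<Sum>m\<in>{K..<n}. (1/a)^m)" by (simp add: sum_distrib_left)
  also have "(\<Sum>m\<in>{K..<n}. (1/a)^m) = (1/a)^K * (\<Sum>i<n-K. (1/a)^i)"
  proof -
    have "(\<Sum>m\<in>{K..<n}. (1/a)^m) = (\<Sum>i<n-K. (1/a)^(K+i))"
      using Kn by (intro sum.reindex_bij_witness[where j="\<lambda>m. m - K" and i="\<lambda>i. K+i"]) auto
    then show ?thesis by (simp add: power_add sum_distrib_left)
  qed
  also have "(\<Sum>i<n-K. (1/a)^i) = (1 - (1/a)^(n-K)) / (1 - 1/a)"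
    using assms(1) by (simp add: geometric_sum, metis minus_diff_eq minus_divide_divide)
  also have "\<dots> \<le> 1 / (1 - 1/a)"
    using assms(1) by (intro divide_right_mono) auto
  also have "1 / (1 - 1/a) = a / (a - 1)" using assms(1) by (simp add: field_simps)
  finally have "(\<Sum>m\<in>S. z^2 / a^m) \<le> z^2 * ((1/a)^K * (a / (a - 1)))"
    using assms(1,4) by (simp add: mult_left_mono)
  also have "\<dots> = z * (z / a^K) * (a / (a-1))" by (simp add: power2_eq_square power_divide)
  also have "\<dots> \<le> z * 1 * (a / (a-1))"
  proof -
    have "z / a^K \<le> 1" using assms(3)[OF KS] assms(1) by simp
    then show ?thesis using assms(1,4) by (intro mult_right_mono mult_left_mono) auto
  qed
  finally show ?thesis by (simp add: mult.commute)
qed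

definition kk :: "real \<Rightarrow> nat \<Rightarrow> nat" where "kk a m = nat \<lfloor>a^m\<rfloor>"

lemma kk_bounds:
  assumes "a > 1"
  shows "1 \<le> kk a m" "real (kk a m) \<le> a^m" "a^m \<le> 2 * real (kk a m)"
proof -
  have a1: "1 \<le> a^m" using assms by simp
  show "1 \<le> kk a m" using a1 by (simp add: kk_def le_nat_floor)
  show "real (kk a m) \<le> a^m" using a1 by (simp add: kk_def)
  have "a^m < real_of_int \<lfloor>a^m\<rfloor> + 1" by linarith
  moreover have "1 \<le> real_of_int \<lfloor>a^m\<rfloor>" using a1 by simp
  moreover have "real (kk a m) = real_of_int \<lfloor>a^m\<rfloor>" using a1 by (simp add: kk_def)
  ultimately show "a^m \<le> 2 * real (kk a m)" by linarith
qed

lemma term_bound: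
  assumes "a > 1" "z \<ge> 0"
  shows "(min z (real (kk a m)))^2 / real (kk a m) \<le> 2 * (if a^m \<le> z then a^m else 0) + 2 * (if a^m > z then z^2 / a^m else 0)"
proof -
  note b = kk_bounds[OF assms(1), of m]
  define k where "k = real (kk a m)"
  have k1: "k \<ge> 1" using b by (simp add: k_def)
  have h1: "(min z k)^2 / k \<le> k" using k1 assms(2)
    by (cases "z \<le> k") (auto simp: power2_eq_square field_simps intro: mult_mono)
  have h2: "(min z k)^2 / k \<le> z^2 / k" using k1 assms(2)
    by (intro divide_right_mono) (auto simp: min_def intro: power_mono)
  have h3: "z^2 / k \<le> 2 * (z^2 / a^m)"
  proof -
    have "a^m * z^2 \<le> (2 * k) * z^2" using b by (intro mult_right_mono) (auto simp: k_def)
    then show ?thesis using k1 assms by (simp add: field_simps)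
  qed
  show ?thesis
  proof (cases "a^m \<le> z")
    case True
    then show ?thesis using h1 b k1 by (simp add: k_def[symmetric])
  next
    case False
    then show ?thesis using h2 h3 by (simp add: k_def[symmetric])
  qed
qed

lemma partial_bound:
  assumes "a > 1" "z \<ge> 0"
  shows "(\<Sum>m<n. (min z (real (kk a m)))^2 / real (kk a m)) \<le> 4 * a * z / (a - 1)"
proof -
  have "(\<Sum>m<n. (min z (real (kk a m)))^2 / real (kk a m))
     \<le> (\<Sum>m<n. 2 * (if a^m \<le> z then a^m else 0) + 2 * (if a^m > z then z^2 / a^m else 0))"
    using term_bound[OF assms] by (intro sum_mono) auto
  also have "\<dots> = 2 * (\<Sum>m\<in>{m\<in>{..<n}. a^m \<le> z}. a^m) + 2 * (\<Sum>m\<in>{m\<in>{..<n}. a^m > z}. z^2 / a^m)"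
    by (simp add: sum.distrib sum_distrib_left[symmetric] sum.inter_filter[symmetric])
  also have "\<dots> \<le> 2 * (a * z / (a - 1)) + 2 * (a * z / (a - 1))"
    using assms by (intro add_mono mult_left_mono geo_up geo_down) auto
  finally show ?thesis by simp
qed




lemma exists_pow_bracket:
  fixes a :: real assumes "a > 1" "1 \<le> x"
  obtains m where "a^m \<le> x" "x < a^Suc m"
proof -
  obtain K where K: "x < a^K" using real_arch_pow[OF assms(1)] by blast
  define m where "m = (LEAST m. x < a^Suc m)"
  have ex: "x < a^Suc K" using K assms(1)
    by (meson less_le_trans order.strict_implies_order power_increasing_iff less_Suc_eq_le power_strict_increasing_iff lessI)
  have Pm: "x < a^Suc m" unfolding m_def by (rule LeastI[of _ K]) (rule ex)
  have "a^m \<le> x"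
  proof (cases m)
    case 0 then show ?thesis using assms by simp
  next
    case (Suc m')
    have "\<not> x < a^Suc m'" using Suc unfolding m_def
      by (metis Suc m_def lessI not_less_Least)
    then show ?thesis using Suc by simp
  qed
  then show ?thesis using Pm that by blast
qed

lemma interp:
  fixes T Y :: "nat \<Rightarrow> real"
  assumes a: "a > 1" and e: "e \<ge> 0" and Tpos: "\<And>j. 1 \<le> j \<Longrightarrow> 0 \<le> T j"
    and ev1: "eventually (\<lambda>m. (\<Sum>j=1..kk a m. T j) \<le> real (kk a m) * e) sequentially"
    and ev2: "eventually (\<lambda>j. Y j = T j) sequentially"
    and d: "d > 0"
  shows "eventually (\<lambda>n. (\<Sum>j=1..n. Y j) / real n \<le> a * e + d) sequentially"
proof -
  obtain J where J: "\<And>j. j \<ge> J \<Longrightarrow> Y j = T j" using ev2 by (auto simp: eventually_sequentially)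
  obtain m0 where m0: "\<And>m. m \<ge> m0 \<Longrightarrow> (\<Sum>j=1..kk a m. T j) \<le> real (kk a m) * e"
    using ev1 by (auto simp: eventually_sequentially)
  define D where "D = (\<Sum>j=1..J. Y j - T j)"
  obtain n1 :: nat where n1: "a^m0 \<le> real n1" using real_nat_ceiling_ge by blast
  obtain n2 :: nat where n2: "\<bar>D\<bar> / d \<le> real n2" using real_nat_ceiling_ge by blast
  show ?thesis unfolding eventually_sequentially
  proof (intro exI allI impI)
    fix n assume nge: "max (max J 1) (max n1 n2) \<le> n"
    then have n1': "1 \<le> real n" by simp
    obtain m where m: "a^m \<le> real n" "real n < a^Suc m" using exists_pow_bracket[OF a n1'] by blast
    have "m0 < Suc m"
    proof (rule ccontr)
      assume "\<not> m0 < Suc m"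
      then have "a^Suc m \<le> a^m0" using a by (intro power_increasing) auto
      then show False using m n1 nge by linarith
    qed
    then have bnd: "(\<Sum>j=1..kk a (Suc m). T j) \<le> real (kk a (Suc m)) * e" using m0 by simp
    have nk: "n \<le> kk a (Suc m)"
    proof -
      have "int n \<le> \<lfloor>a^Suc m\<rfloor>" using m(2) by (subst le_floor_iff) simp
      then show ?thesis unfolding kk_def by linarith
    qed
    have "(\<Sum>j=1..n. T j) \<le> (\<Sum>j=1..kk a (Suc m). T j)"
      using nk Tpos by (intro sum_mono2) auto
    also have "\<dots> \<le> real (kk a (Suc m)) * e" by (rule bnd)
    also have "\<dots> \<le> a^Suc m * e" using kk_bounds(2)[OF a, of "Suc m"] e by (intro mult_right_mono) auto
    also have "\<dots> = a * (a^m * e)" by simp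
    also have "\<dots> \<le> a * (real n * e)" using a e m(1) by (intro mult_left_mono mult_right_mono) auto
    finally have ST: "(\<Sum>j=1..n. T j) \<le> a * e * real n" by (simp add: algebra_simps)
    have "(\<Sum>j=1..n. Y j) = (\<Sum>j=1..n. T j) + (\<Sum>j=1..n. Y j - T j)"
      by (simp add: sum_subtractf)
    also have "(\<Sum>j=1..n. Y j - T j) = D"
    proof -
      have "(\<Sum>j=1..n. Y j - T j) = (\<Sum>j=1..J. Y j - T j) + (\<Sum>j=Suc J..n. Y j - T j)"
      proof -
        have "{1..n} = {1..J} \<union> {Suc J..n}" using nge by auto
        then show ?thesis by (simp add: sum.union_disjoint)
      qed
      moreover have "(\<Sum>j=Suc J..n. Y j - T j) = 0" using J by (intro sum.neutral) auto
      ultimately show ?thesis by (simp add: D_def)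
    qed
    finally have "(\<Sum>j=1..n. Y j) \<le> a * e * real n + \<bar>D\<bar>" using ST by linarith
    moreover have "\<bar>D\<bar> \<le> d * real n"
    proof -
      have "\<bar>D\<bar> \<le> d * real n2" using n2 d by (simp add: divide_le_eq mult.commute)
      also have "\<dots> \<le> d * real n" using nge d by (intro mult_left_mono) auto
      finally show ?thesis .
    qed
    ultimately have "(\<Sum>j=1..n. Y j) \<le> (a * e + d) * real n" by (simp add: algebra_simps)
    then show "(\<Sum>j=1..n. Y j) / real n \<le> a * e + d" using n1' by (simp add: divide_le_eq)
  qed
qed




locale core = M: prob_space M + N: prob_space N for M :: "'a measure" and N :: "'b measure" +
  fixes Y :: "nat \<Rightarrow> 'a \<Rightarrow> real" and Z :: "'b \<Rightarrow> real"
  assumes indep: "M.indep_vars (\<lambda>_. borel) Y {1..}"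
  and Ypos: "\<And>j \<omega>. 1 \<le> j \<Longrightarrow> \<omega> \<in> space M \<Longrightarrow> 0 \<le> Y j \<omega>"
  and Zm[measurable]: "Z \<in> borel_measurable N"
  and Zpos: "\<And>x. x \<in> space N \<Longrightarrow> 0 \<le> Z x"
  and Zint: "integrable N Z"
  and dom: "\<And>j t. 1 \<le> j \<Longrightarrow> 0 < t \<Longrightarrow>
      emeasure M {\<omega>\<in>space M. t \<le> Y j \<omega>} \<le> emeasure N {x\<in>space N. t \<le> Z x}"
begin

lemma Ym[measurable]: "1 \<le> j \<Longrightarrow> Y j \<in> borel_measurable M"
  using indep unfolding M.indep_vars_def by auto

lemma dom_min1:
  assumes j: "1 \<le> j" and a: "0 \<le> a"
  shows "(\<integral>\<^sup>+\<omega>. ennreal (min (Y j \<omega>) a) \<partial>M) \<le> (\<integral>\<^sup>+x. ennreal (min (Z x) a) \<partial>N)"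
proof -
  have "(\<integral>\<^sup>+\<omega>. ennreal (min (Y j \<omega>) a) \<partial>M) = (\<integral>\<^sup>+\<omega>. (\<integral>\<^sup>+t. indicator {..a} t * indicator {0<..Y j \<omega>} t \<partial>lborel) \<partial>M)"
    using Ypos[OF j] a by (intro nn_integral_cong) (simp add: G1)
  also have "\<dots> \<le> (\<integral>\<^sup>+x. (\<integral>\<^sup>+t. indicator {..a} t * indicator {0<..Z x} t \<partial>lborel) \<partial>N)"
    by (rule layer_mono) (use j dom in \<open>auto intro: M.sigma_finite_measure N.sigma_finite_measure\<close>)
  also have "\<dots> = (\<integral>\<^sup>+x. ennreal (min (Z x) a) \<partial>N)"
    using Zpos a by (intro nn_integral_cong) (simp add: G1)
  finally show ?thesis .
qed

lemma dom_min2: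
  assumes j: "1 \<le> j" and a: "0 \<le> a"
  shows "(\<integral>\<^sup>+\<omega>. ennreal ((min (Y j \<omega>) a)^2) \<partial>M) \<le> (\<integral>\<^sup>+x. ennreal ((min (Z x) a)^2) \<partial>N)"
proof -
  have "(\<integral>\<^sup>+\<omega>. ennreal ((min (Y j \<omega>) a)^2) \<partial>M) = (\<integral>\<^sup>+\<omega>. (\<integral>\<^sup>+t. (ennreal (2*t) * indicator {..a} t) * indicator {0<..Y j \<omega>} t \<partial>lborel) \<partial>M)"
    using Ypos[OF j] a by (intro nn_integral_cong) (simp add: G2)
  also have "\<dots> \<le> (\<integral>\<^sup>+x. (\<integral>\<^sup>+t. (ennreal (2*t) * indicator {..a} t) * indicator {0<..Z x} t \<partial>lborel) \<partial>N)"
    by (rule layer_mono) (use j dom in \<open>auto intro: M.sigma_finite_measure N.sigma_finite_measure\<close>)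
  also have "\<dots> = (\<integral>\<^sup>+x. ennreal ((min (Z x) a)^2) \<partial>N)"
    using Zpos a by (intro nn_integral_cong) (simp add: G2)
  finally show ?thesis .
qed

definition T :: "nat \<Rightarrow> 'a \<Rightarrow> real" where "T j \<omega> = min (Y j \<omega>) (real j)"

lemma Tm[measurable]: "1 \<le> j \<Longrightarrow> T j \<in> borel_measurable M"
  unfolding T_def by measurable

lemma T_bounds: "1 \<le> j \<Longrightarrow> \<omega> \<in> space M \<Longrightarrow> 0 \<le> T j \<omega> \<and> T j \<omega> \<le> real j"
  using Ypos by (auto simp: T_def)

lemma T_int: assumes "1 \<le> j" shows "integrable M (T j)" "integrable M (\<lambda>\<omega>. (T j \<omega>)^2)"
proof -
  show "integrable M (T j)"
    by (rule M.integrable_const_bound[where B="real j"]) (use T_bounds assms in auto)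
  show "integrable M (\<lambda>\<omega>. (T j \<omega>)^2)"
  proof (rule M.integrable_const_bound[where B="(real j)^2"])
    show "AE x in M. norm ((T j x)^2) \<le> (real j)^2"
      using T_bounds[OF assms] by (auto intro!: power_mono)
  qed (use assms in measurable)
qed

lemma Zmin_int: "0 \<le> a \<Longrightarrow> integrable N (\<lambda>x. (min (Z x) a)^2)"
  by (rule N.integrable_const_bound[where B="a^2"]) (auto intro!: power_mono simp: Zpos)

lemma EZ_nonneg: "0 \<le> (\<integral>x. Z x \<partial>N)"
  using Zpos by (intro integral_nonneg_AE) auto

lemma T_mean: assumes "1 \<le> j" shows "M.expectation (T j) \<le> (\<integral>x. Z x \<partial>N)"
proof -
  have "ennreal (M.expectation (T j)) = (\<integral>\<^sup>+\<omega>. ennreal (T j \<omega>) \<partial>M)"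
    using T_int[OF assms] T_bounds[OF assms] by (intro nn_integral_eq_integral[symmetric]) auto
  also have "\<dots> \<le> (\<integral>\<^sup>+x. ennreal (min (Z x) (real j)) \<partial>N)"
    unfolding T_def by (rule dom_min1) (use assms in auto)
  also have "\<dots> \<le> (\<integral>\<^sup>+x. ennreal (Z x) \<partial>N)"
    by (intro nn_integral_mono ennreal_leI) auto
  also have "\<dots> = ennreal (\<integral>x. Z x \<partial>N)"
    using Zint Zpos by (intro nn_integral_eq_integral) auto
  finally show ?thesis using EZ_nonneg by (simp add: ennreal_le_iff)
qed

lemma T_sq: assumes "1 \<le> j" shows "M.expectation (\<lambda>\<omega>. (T j \<omega>)^2) \<le> (\<integral>x. (min (Z x) (real j))^2 \<partial>N)"
proof -
  have "ennreal (M.expectation (\<lambda>\<omega>. (T j \<omega>)^2)) = (\<integral>\<^sup>+\<omega>. ennreal ((T j \<omega>)^2) \<partial>M)"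
    using T_int[OF assms] by (intro nn_integral_eq_integral[symmetric]) auto
  also have "\<dots> \<le> (\<integral>\<^sup>+x. ennreal ((min (Z x) (real j))^2) \<partial>N)"
    unfolding T_def by (rule dom_min2) (use assms in auto)
  also have "\<dots> = ennreal (\<integral>x. (min (Z x) (real j))^2 \<partial>N)"
    using Zmin_int[of "real j"] by (intro nn_integral_eq_integral) auto
  finally show ?thesis by (simp add: ennreal_le_iff)
qed

end




context core begin

definition c :: "nat \<Rightarrow> 'a \<Rightarrow> real" where "c j \<omega> = T j \<omega> - M.expectation (T j)"

lemma cm[measurable]: "1 \<le> j \<Longrightarrow> c j \<in> borel_measurable M"
  unfolding c_def by measurable

lemma c_int: assumes "1 \<le> j" shows "integrable M (c j)" "integrable M (\<lambda>\<omega>. (c j \<omega>)^2)"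
proof -
  show "integrable M (c j)" unfolding c_def using T_int[OF assms] by auto
  have "(\<lambda>\<omega>. (c j \<omega>)^2) = (\<lambda>\<omega>. (T j \<omega>)^2 - 2 * M.expectation (T j) * T j \<omega> + (M.expectation (T j))^2)"
    by (auto simp: c_def power2_eq_square algebra_simps)
  then show "integrable M (\<lambda>\<omega>. (c j \<omega>)^2)" using T_int[OF assms] by auto
qed

lemma c_mean: "1 \<le> j \<Longrightarrow> M.expectation (c j) = 0"
  unfolding c_def using T_int by (simp add: M.prob_space)

lemma c_sq: assumes "1 \<le> j" shows "M.expectation (\<lambda>\<omega>. (c j \<omega>)^2) \<le> M.expectation (\<lambda>\<omega>. (T j \<omega>)^2)"
proof -
  have "(\<lambda>\<omega>. (c j \<omega>)^2) = (\<lambda>\<omega>. (T j \<omega>)^2 - 2 * M.expectation (T j) * T j \<omega> + (M.expectation (T j))^2)"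
    by (auto simp: c_def power2_eq_square algebra_simps)
  then have "M.expectation (\<lambda>\<omega>. (c j \<omega>)^2) = M.expectation (\<lambda>\<omega>. (T j \<omega>)^2) - (M.expectation (T j))^2"
    using T_int[OF assms] by (simp add: M.prob_space power2_eq_square)
  then show ?thesis by simp
qed

lemma c_indep: "M.indep_vars (\<lambda>_. borel) c {1..}"
proof -
  have "M.indep_vars (\<lambda>_. borel) (\<lambda>j \<omega>. (\<lambda>y. min y (real j) - M.expectation (T j)) (Y j \<omega>)) {1..}"
    by (rule M.indep_vars_compose2[OF indep]) measurable
  moreover have "c = (\<lambda>j \<omega>. (\<lambda>y. min y (real j) - M.expectation (T j)) (Y j \<omega>))"
    by (auto simp: c_def T_def fun_eq_iff)
  ultimately show ?thesis by simp
qed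

lemma var_sum:
  assumes J: "finite J" "J \<subseteq> {1..}"
  shows "M.expectation (\<lambda>\<omega>. (\<Sum>j\<in>J. c j \<omega>)^2) = (\<Sum>j\<in>J. M.expectation (\<lambda>\<omega>. (c j \<omega>)^2))"
proof -
  have pr: "integrable M (\<lambda>\<omega>. c i \<omega> * c j \<omega>) \<and>
      M.expectation (\<lambda>\<omega>. c i \<omega> * c j \<omega>) = (if i = j then M.expectation (\<lambda>\<omega>. (c j \<omega>)^2) else 0)"
    if "i \<in> J" "j \<in> J" for i j
  proof (cases "i = j")
    case True
    then show ?thesis using c_int[of j] that J by (auto simp: power2_eq_square)
  next
    case False
    have ind: "M.indep_vars (\<lambda>_. borel) c {i, j}"
      using that J by (intro M.indep_vars_subset[OF c_indep]) auto
    have ints: "\<And>k. k \<in> {i,j} \<Longrightarrow> integrable M (c k)" using that J c_int by auto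
    have "integrable M (\<lambda>\<omega>. \<Prod>k\<in>{i,j}. c k \<omega>)"
      by (rule M.indep_vars_integrable[OF _ ind ints]) auto
    moreover have "M.expectation (\<lambda>\<omega>. \<Prod>k\<in>{i,j}. c k \<omega>) = (\<Prod>k\<in>{i,j}. M.expectation (c k))"
      by (rule M.indep_vars_lebesgue_integral[OF _ ind ints]) auto
    ultimately show ?thesis using False that J c_mean by auto
  qed
  have "M.expectation (\<lambda>\<omega>. (\<Sum>j\<in>J. c j \<omega>)^2) = M.expectation (\<lambda>\<omega>. \<Sum>i\<in>J. \<Sum>j\<in>J. c i \<omega> * c j \<omega>)"
    by (simp add: power2_eq_square sum_product)
  also have "\<dots> = (\<Sum>i\<in>J. \<Sum>j\<in>J. M.expectation (\<lambda>\<omega>. c i \<omega> * c j \<omega>))"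
    using pr by (simp add: Bochner_Integration.integral_sum)
  also have "\<dots> = (\<Sum>i\<in>J. \<Sum>j\<in>J. (if i = j then M.expectation (\<lambda>\<omega>. (c j \<omega>)^2) else 0))"
    using pr by (intro sum.cong) auto
  also have "\<dots> = (\<Sum>i\<in>J. M.expectation (\<lambda>\<omega>. (c i \<omega>)^2))"
    using J(1) by (simp add: sum.delta)
  finally show ?thesis .
qed

lemma cheb:
  assumes J: "finite J" "J \<subseteq> {1..}" and a: "a > 0"
  shows "M.prob {\<omega>\<in>space M. a \<le> (\<Sum>j\<in>J. c j \<omega>)} \<le> (\<Sum>j\<in>J. M.expectation (\<lambda>\<omega>. (T j \<omega>)^2)) / a^2"
proof -
  have Jge: "\<And>j. j \<in> J \<Longrightarrow> 1 \<le> j" using J by auto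
  define f where "f \<omega> = (\<Sum>j\<in>J. c j \<omega>)" for \<omega>
  have fm[measurable]: "f \<in> borel_measurable M" unfolding f_def by (auto intro!: borel_measurable_sum cm Jge)
  have f_mean: "M.expectation f = 0"
    unfolding f_def using J c_int c_mean Jge by (auto simp: Bochner_Integration.integral_sum intro!: sum.neutral)
  have f2_int: "integrable M (\<lambda>\<omega>. (f \<omega>)^2)"
  proof -
    have "(\<lambda>\<omega>. (f \<omega>)^2) = (\<lambda>\<omega>. \<Sum>i\<in>J. \<Sum>j\<in>J. c i \<omega> * c j \<omega>)"
      by (simp add: f_def power2_eq_square sum_product)
    moreover have "integrable M (\<lambda>\<omega>. c i \<omega> * c j \<omega>)" if "i \<in> J" "j \<in> J" for i j
    proof (cases "i = j")
      case True then show ?thesis using c_int[of j] that J by (auto simp: power2_eq_square)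
    next
      case False
      have ind: "M.indep_vars (\<lambda>_. borel) c {i, j}"
        using that J by (intro M.indep_vars_subset[OF c_indep]) auto
      have ints: "\<And>k. k \<in> {i,j} \<Longrightarrow> integrable M (c k)" using that J c_int by auto
      have "integrable M (\<lambda>\<omega>. \<Prod>k\<in>{i,j}. c k \<omega>)"
        by (rule M.indep_vars_integrable[OF _ ind ints]) auto
      then show ?thesis using False by simp
    qed
    ultimately show ?thesis by simp
  qed
  have "M.prob {\<omega>\<in>space M. a \<le> f \<omega>} \<le> M.prob {\<omega>\<in>space M. a \<le> \<bar>f \<omega> - M.expectation f\<bar>}"
    using f_mean by (intro M.finite_measure_mono) auto
  also have "\<dots> \<le> M.variance f / a^2"
    by (rule M.Chebyshev_inequality) (use f2_int a in auto)
  also have "M.variance f = M.expectation (\<lambda>\<omega>. (f \<omega>)^2)" using f_mean by simp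
  also have "\<dots> = (\<Sum>j\<in>J. M.expectation (\<lambda>\<omega>. (c j \<omega>)^2))" unfolding f_def by (rule var_sum[OF J])
  also have "\<dots> \<le> (\<Sum>j\<in>J. M.expectation (\<lambda>\<omega>. (T j \<omega>)^2))"
    using J by (intro sum_mono c_sq) auto
  finally show ?thesis using a by (simp add: f_def divide_right_mono)
qed

end



context core begin

lemma sumT2:
  assumes "1 \<le> k"
  shows "(\<Sum>j\<in>{1..k}. M.expectation (\<lambda>\<omega>. (T j \<omega>)^2)) \<le> real k * (\<integral>x. (min (Z x) (real k))^2 \<partial>N)"
proof -
  have "(\<Sum>j\<in>{1..k}. M.expectation (\<lambda>\<omega>. (T j \<omega>)^2)) \<le> (\<Sum>j\<in>{1..k}. (\<integral>x. (min (Z x) (real k))^2 \<partial>N))"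
  proof (intro sum_mono)
    fix j assume j: "j \<in> {1..k}"
    have "M.expectation (\<lambda>\<omega>. (T j \<omega>)^2) \<le> (\<integral>x. (min (Z x) (real j))^2 \<partial>N)"
      using j by (intro T_sq) auto
    also have "\<dots> \<le> (\<integral>x. (min (Z x) (real k))^2 \<partial>N)"
      using j Zmin_int Zpos by (intro integral_mono) (auto intro!: power_mono)
    finally show "M.expectation (\<lambda>\<omega>. (T j \<omega>)^2) \<le> (\<integral>x. (min (Z x) (real k))^2 \<partial>N)" .
  qed
  then show ?thesis by simp
qed

definition g :: "real \<Rightarrow> nat \<Rightarrow> 'b \<Rightarrow> real" where
  "g a m x = (min (Z x) (real (kk a m)))^2 / real (kk a m)"

lemma g_int: "integrable N (g a m)"
  unfolding g_def using Zmin_int by auto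

lemma g_nonneg: "0 \<le> g a m x"
  unfolding g_def by simp

lemma g_summable:
  assumes a: "a > 1"
  shows "summable (\<lambda>m. \<integral>x. g a m x \<partial>N)"
proof (rule summable_suminf_not_top)
  show "\<And>m. 0 \<le> (\<integral>x. g a m x \<partial>N)" using g_nonneg by (intro integral_nonneg_AE) auto
  have "(\<Sum>m. ennreal (\<integral>x. g a m x \<partial>N)) = (\<Sum>m. \<integral>\<^sup>+x. ennreal (g a m x) \<partial>N)"
    using g_int g_nonneg by (intro suminf_cong nn_integral_eq_integral[symmetric]) auto
  also have "\<dots> = (\<integral>\<^sup>+x. (\<Sum>m. ennreal (g a m x)) \<partial>N)"
    by (rule nn_integral_suminf[symmetric]) (simp add: g_def)
  also have "\<dots> \<le> (\<integral>\<^sup>+x. ennreal (4 * a * Z x / (a - 1)) \<partial>N)"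
  proof (intro nn_integral_mono)
    fix x assume x: "x \<in> space N"
    show "(\<Sum>m. ennreal (g a m x)) \<le> ennreal (4 * a * Z x / (a - 1))"
      unfolding suminf_eq_SUP
    proof (intro SUP_least)
      fix n
      have "(\<Sum>m<n. ennreal (g a m x)) = ennreal (\<Sum>m<n. g a m x)"
        using g_nonneg by simp
      also have "\<dots> \<le> ennreal (4 * a * Z x / (a - 1))"
        unfolding g_def using partial_bound[OF a Zpos[OF x]] by (intro ennreal_leI) auto
      finally show "(\<Sum>m<n. ennreal (g a m x)) \<le> ennreal (4 * a * Z x / (a - 1))" .
    qed
  qed
  also have "\<dots> = ennreal (\<integral>x. 4 * a * Z x / (a - 1) \<partial>N)"
    using Zint Zpos a by (intro nn_integral_eq_integral) auto
  also have "\<dots> < top" by simp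
  finally show "(\<Sum>m. ennreal (\<integral>x. g a m x \<partial>N)) \<noteq> top" by simp
qed

definition B :: "real \<Rightarrow> real \<Rightarrow> nat \<Rightarrow> 'a set" where
  "B a e m = {\<omega>\<in>space M. e * real (kk a m) \<le> (\<Sum>j\<in>{1..kk a m}. c j \<omega>)}"

lemma B_sets[measurable]: "B a e m \<in> sets M"
proof -
  have "(\<lambda>\<omega>. \<Sum>j\<in>{1..kk a m}. c j \<omega>) \<in> borel_measurable M"
    by (auto intro!: borel_measurable_sum cm)
  then show ?thesis unfolding B_def by measurable
qed

lemma B_prob:
  assumes a: "a > 1" and e: "e > 0"
  shows "M.prob (B a e m) \<le> (1 / e^2) * (\<integral>x. g a m x \<partial>N)"
proof -
  define k where "k = kk a m"
  have k1: "1 \<le> k" using kk_bounds[OF a] by (simp add: k_def)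
  have "M.prob (B a e m) \<le> (\<Sum>j\<in>{1..k}. M.expectation (\<lambda>\<omega>. (T j \<omega>)^2)) / (e * real k)^2"
    unfolding B_def k_def[symmetric] using k1 e by (intro cheb) auto
  also have "\<dots> \<le> (real k * (\<integral>x. (min (Z x) (real k))^2 \<partial>N)) / (e * real k)^2"
    by (intro divide_right_mono sumT2 k1) simp
  also have "\<dots> = (1 / e^2) * ((\<integral>x. (min (Z x) (real k))^2 \<partial>N) / real k)"
    using k1 e by (simp add: power2_eq_square field_simps)
  also have "(\<integral>x. (min (Z x) (real k))^2 \<partial>N) / real k = (\<integral>x. g a m x \<partial>N)"
    unfolding g_def k_def by simp
  finally show ?thesis .
qed

lemma B_AE:
  assumes a: "a > 1" and e: "e > 0"
  shows "AE \<omega> in M. eventually (\<lambda>m. \<omega> \<in> space M - B a e m) sequentially"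
proof (rule borel_cantelli_AE1)
  show "\<And>m. B a e m \<in> sets M" by simp
  show "\<And>m. emeasure M (B a e m) < \<infinity>" by (simp add: M.emeasure_eq_measure)
  show "summable (\<lambda>m. measure M (B a e m))"
  proof (rule summable_comparison_test')
    show "summable (\<lambda>m. (1 / e^2) * (\<integral>x. g a m x \<partial>N))"
      using g_summable[OF a] by (rule summable_mult)
    show "norm (measure M (B a e m)) \<le> (1 / e^2) * (\<integral>x. g a m x \<partial>N)" for m
      using B_prob[OF a e] by simp
  qed
qed

end



context core begin

definition A :: "nat \<Rightarrow> 'a set" where
  "A n = {\<omega>\<in>space M. real (Suc n) < Y (Suc n) \<omega>}"

lemma A_sets[measurable]: "A n \<in> sets M"
  unfolding A_def by measurable

lemma A_AE: "AE \<omega> in M. eventually (\<lambda>n. \<omega> \<in> space M - A n) sequentially"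
proof (rule borel_cantelli_AE1)
  show "\<And>m. A m \<in> sets M" by simp
  show "\<And>m. emeasure M (A m) < \<infinity>" by (simp add: M.emeasure_eq_measure)
  define F where "F n = {x\<in>space N. real (Suc n) \<le> Z x}" for n
  have F_sets[measurable]: "F n \<in> sets N" for n unfolding F_def by measurable
  have AF: "measure M (A n) \<le> measure N (F n)" for n
  proof -
    have "emeasure M (A n) \<le> emeasure M {\<omega>\<in>space M. real (Suc n) \<le> Y (Suc n) \<omega>}"
      unfolding A_def by (intro emeasure_mono) auto
    also have "\<dots> \<le> emeasure N (F n)" unfolding F_def by (intro dom) auto
    finally show ?thesis by (simp add: M.emeasure_eq_measure N.emeasure_eq_measure)
  qed
  have "summable (\<lambda>n. measure N (F n))"
  proof (rule summable_suminf_not_top)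
    show "\<And>n. 0 \<le> measure N (F n)" by simp
    have fm: "(\<lambda>x. nat \<lfloor>Z x\<rfloor>) \<in> measurable N (count_space UNIV)" by measurable
    have "(\<Sum>n. ennreal (measure N (F n))) = (\<Sum>n. emeasure N {x\<in>space N. n < nat \<lfloor>Z x\<rfloor>})"
    proof (intro suminf_cong)
      fix n
      have "F n = {x\<in>space N. n < nat \<lfloor>Z x\<rfloor>}"
        unfolding F_def by (auto simp: le_floor_iff less_floor_iff) linarith+
      then show "ennreal (measure N (F n)) = emeasure N {x\<in>space N. n < nat \<lfloor>Z x\<rfloor>}"
        by (simp add: N.emeasure_eq_measure)
    qed
    also have "\<dots> = (\<integral>\<^sup>+x. of_nat (nat \<lfloor>Z x\<rfloor>) \<partial>N)"
      by (rule nn_integral_nat_function[OF fm, symmetric])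
    also have "\<dots> \<le> (\<integral>\<^sup>+x. ennreal (Z x) \<partial>N)"
      using Zpos by (intro nn_integral_mono) (auto simp: ennreal_of_nat_eq_real_of_nat intro!: ennreal_leI)
    also have "\<dots> = ennreal (\<integral>x. Z x \<partial>N)"
      using Zint Zpos by (intro nn_integral_eq_integral) auto
    also have "\<dots> < top" by simp
    finally show "(\<Sum>n. ennreal (measure N (F n))) \<noteq> top" by simp
  qed
  then show "summable (\<lambda>n. measure M (A n))"
    by (rule summable_comparison_test') (use AF in auto)
qed

lemma core_step:
  assumes a: "a > 1" and e: "e > 0" and d: "d > 0"
  shows "AE \<omega> in M. eventually (\<lambda>n. (\<Sum>j=1..n. Y j \<omega>) / real n \<le> a * ((\<integral>x. Z x \<partial>N) + e) + d) sequentially"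
  using B_AE[OF a e] A_AE
proof eventually_elim
  fix \<omega> assume evB: "eventually (\<lambda>m. \<omega> \<in> space M - B a e m) sequentially"
    and evA: "eventually (\<lambda>n. \<omega> \<in> space M - A n) sequentially"
  define EZ where "EZ = (\<integral>x. Z x \<partial>N)"
  have \<omega>: "\<omega> \<in> space M"
  proof -
    obtain n where "\<omega> \<in> space M - A n" using evA eventually_happens'[OF sequentially_bot] by blast
    then show ?thesis by simp
  qed
  show "eventually (\<lambda>n. (\<Sum>j=1..n. Y j \<omega>) / real n \<le> a * (EZ + e) + d) sequentially"
  proof (rule interp[OF a _ _ _ _ d, where T="\<lambda>j. T j \<omega>"])
    show "0 \<le> EZ + e" using EZ_nonneg e by (simp add: EZ_def)
    show "\<And>j. 1 \<le> j \<Longrightarrow> 0 \<le> T j \<omega>" using T_bounds \<omega> by auto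
    show "eventually (\<lambda>m. (\<Sum>j=1..kk a m. T j \<omega>) \<le> real (kk a m) * (EZ + e)) sequentially"
      using evB
    proof eventually_elim
      fix m assume "\<omega> \<in> space M - B a e m"
      then have lt: "(\<Sum>j\<in>{1..kk a m}. c j \<omega>) < e * real (kk a m)" by (auto simp: B_def)
      have "(\<Sum>j=1..kk a m. T j \<omega>) = (\<Sum>j\<in>{1..kk a m}. c j \<omega>) + (\<Sum>j\<in>{1..kk a m}. M.expectation (T j))"
        by (simp add: c_def sum_subtractf)
      also have "(\<Sum>j\<in>{1..kk a m}. M.expectation (T j)) \<le> (\<Sum>j\<in>{1..kk a m}. EZ)"
        unfolding EZ_def by (intro sum_mono T_mean) auto
      finally show "(\<Sum>j=1..kk a m. T j \<omega>) \<le> real (kk a m) * (EZ + e)"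
        using lt by (simp add: algebra_simps)
    qed
    show "eventually (\<lambda>j. Y j \<omega> = T j \<omega>) sequentially"
    proof -
      have "eventually (\<lambda>n. Y (Suc n) \<omega> = T (Suc n) \<omega>) sequentially"
        using evA by eventually_elim (auto simp: A_def T_def)
      then show ?thesis using eventually_sequentially_Suc[of "\<lambda>j. Y j \<omega> = T j \<omega>"] by simp
    qed
  qed
qed

theorem core_main:
  "AE \<omega> in M. \<forall>d>0. eventually (\<lambda>n. (\<Sum>j=1..n. Y j \<omega>) / real n \<le> (\<integral>x. Z x \<partial>N) + d) sequentially"
proof -
  define EZ where "EZ = (\<integral>x. Z x \<partial>N)"
  have EZ0: "0 \<le> EZ" using EZ_nonneg by (simp add: EZ_def)
  define q :: "nat \<Rightarrow> real" where "q r = 1 / real (Suc r)" for r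
  have q: "0 < q r" "q r \<le> 1" for r by (auto simp: q_def)
  have "AE \<omega> in M. \<forall>r. eventually (\<lambda>n. (\<Sum>j=1..n. Y j \<omega>) / real n \<le> (1 + q r) * (EZ + q r) + q r) sequentially"
    unfolding AE_all_countable
  proof
    fix r show "AE \<omega> in M. eventually (\<lambda>n. (\<Sum>j=1..n. Y j \<omega>) / real n \<le> (1 + q r) * (EZ + q r) + q r) sequentially"
      unfolding EZ_def by (rule core_step) (use q in auto)
  qed
  then show ?thesis unfolding EZ_def[symmetric]
  proof eventually_elim
    fix \<omega> assume H: "\<forall>r. eventually (\<lambda>n. (\<Sum>j=1..n. Y j \<omega>) / real n \<le> (1 + q r) * (EZ + q r) + q r) sequentially"
    show "\<forall>d>0. eventually (\<lambda>n. (\<Sum>j=1..n. Y j \<omega>) / real n \<le> EZ + d) sequentially"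
    proof (intro allI impI)
      fix d :: real assume d: "d > 0"
      obtain r where r: "inverse (real (Suc r)) < d / (EZ + 3)"
        using reals_Archimedean[of "d / (EZ + 3)"] d EZ0 by auto
      have "(1 + q r) * (EZ + q r) + q r = EZ + q r * (EZ + 2 + q r)"
        by (simp add: algebra_simps)
      also have "\<dots> \<le> EZ + q r * (EZ + 3)" using q[of r] EZ0 by (intro add_left_mono mult_left_mono) auto
      also have "q r * (EZ + 3) \<le> d"
        using r EZ0 by (simp add: q_def field_simps)
      finally have le: "(1 + q r) * (EZ + q r) + q r \<le> EZ + d" by simp
      show "eventually (\<lambda>n. (\<Sum>j=1..n. Y j \<omega>) / real n \<le> EZ + d) sequentially"
        using H[rule_format, of r] by eventually_elim (use le in linarith)
    qed
  qed
qed

end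



lemma ext_lim:
  fixes N :: "'b measure" and X :: "'b \<Rightarrow> real"
  assumes "prob_space N" and [measurable]: "X \<in> borel_measurable N"
    and P: "(\<integral>\<^sup>+ x. ennreal (max 0 (X x)) \<partial>N) < \<infinity>"
  shows "(\<lambda>k::nat. ereal (\<integral>x. max (X x) (- real k) \<partial>N)) \<longlonglongrightarrow> ext_expectation N X"
proof -
  interpret N: prob_space N by fact
  define P where "P = (\<integral>\<^sup>+ x. ennreal (max 0 (X x)) \<partial>N)"
  define Q where "Q k = (\<integral>\<^sup>+ x. ennreal (min (max 0 (- X x)) (real k)) \<partial>N)" for k :: nat
  define Qi where "Qi = (\<integral>\<^sup>+ x. ennreal (max 0 (- X x)) \<partial>N)"
  have Pfin: "P \<noteq> top" using P by (simp add: P_def)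
  have intP: "integrable N (\<lambda>x. max 0 (X x))"
    by (rule integrableI_bounded) (use P in auto)
  have Qfin: "Q k \<noteq> top" for k
  proof -
    have "Q k \<le> (\<integral>\<^sup>+ x. ennreal (real k) \<partial>N)" unfolding Q_def by (intro nn_integral_mono ennreal_leI) auto
    also have "\<dots> = ennreal (real k)" by (simp add: N.emeasure_space_1)
    finally show ?thesis using top_neq_ennreal by (metis ennreal_mono_minus ennreal_zero_less_top less_le top.extremum_unique neq_top_trans)
  qed
  have eq: "ereal (\<integral>x. max (X x) (- real k) \<partial>N) = enn2ereal P - enn2ereal (Q k)" for k
  proof -
    have int: "integrable N (\<lambda>x. max (X x) (- real k))"
    proof (rule Bochner_Integration.integrable_bound[OF Bochner_Integration.integrable_add[OF intP N.integrable_const[of "real k"]]])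
      show "AE x in N. norm (max (X x) (- real k)) \<le> norm (max 0 (X x) + real k)" by auto
    qed measurable
    have "(\<integral>x. max (X x) (- real k) \<partial>N) = enn2real (\<integral>\<^sup>+x. ennreal (max (X x) (- real k)) \<partial>N) - enn2real (\<integral>\<^sup>+x. ennreal (- max (X x) (- real k)) \<partial>N)"
      by (rule real_lebesgue_integral_def[OF int])
    also have "(\<integral>\<^sup>+x. ennreal (max (X x) (- real k)) \<partial>N) = P"
      unfolding P_def by (intro nn_integral_cong) (auto simp: max_def ennreal_neg)
    also have "(\<integral>\<^sup>+x. ennreal (- max (X x) (- real k)) \<partial>N) = Q k"
      unfolding Q_def by (intro nn_integral_cong) (auto simp: max_def min_def ennreal_neg)
    finally have "(\<integral>x. max (X x) (- real k) \<partial>N) = enn2real P - enn2real (Q k)" .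
    moreover have "enn2ereal P = ereal (enn2real P)" using Pfin
      by (metis enn2ereal_ennreal ennreal_enn2real_if enn2real_nonneg)
    moreover have "enn2ereal (Q k) = ereal (enn2real (Q k))" using Qfin[of k]
      by (metis enn2ereal_ennreal ennreal_enn2real_if enn2real_nonneg)
    ultimately show ?thesis by simp
  qed
  have inc: "incseq (\<lambda>k x. ennreal (min (max 0 (- X x)) (real k)))"
    by (auto simp: incseq_def le_fun_def intro!: ennreal_leI)
  have Qlim: "Q \<longlonglongrightarrow> Qi"
  proof -
    have "incseq Q" unfolding Q_def incseq_def by (auto intro!: nn_integral_mono ennreal_leI)
    then have "Q \<longlonglongrightarrow> (SUP k. Q k)" by (rule LIMSEQ_SUP)
    moreover have "(SUP k. Q k) = Qi"
    proof -
      have "(SUP k. Q k) = (\<integral>\<^sup>+ x. (SUP k. ennreal (min (max 0 (- X x)) (real k))) \<partial>N)"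
        unfolding Q_def using nn_integral_monotone_convergence_SUP[OF inc] by (simp add: image_comp)
      also have "\<dots> = Qi" unfolding Qi_def
      proof (intro nn_integral_cong antisym)
        fix x
        show "(SUP k. ennreal (min (max 0 (- X x)) (real k))) \<le> ennreal (max 0 (- X x))"
          by (intro SUP_least ennreal_leI) auto
        obtain n :: nat where "max 0 (- X x) \<le> real n" using real_arch_simple by blast
        then have "ennreal (max 0 (- X x)) = ennreal (min (max 0 (- X x)) (real n))" by simp
        also have "\<dots> \<le> (SUP k. ennreal (min (max 0 (- X x)) (real k)))" by (rule SUP_upper) auto
        finally show "ennreal (max 0 (- X x)) \<le> (SUP k. ennreal (min (max 0 (- X x)) (real k)))" .
      qed
      finally show ?thesis .
    qed
    ultimately show ?thesis by simp
  qed
  have "(\<lambda>k. enn2ereal P - enn2ereal (Q k)) \<longlonglongrightarrow> enn2ereal P - enn2ereal Qi"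
  proof (rule tendsto_diff_ereal_general)
    show "(\<lambda>k. enn2ereal (Q k)) \<longlonglongrightarrow> enn2ereal Qi" using Qlim by (rule tendsto_enn2erealI)
    show "\<not> ((enn2ereal P = \<infinity> \<and> enn2ereal Qi = \<infinity>) \<or> (enn2ereal P = -\<infinity> \<and> enn2ereal Qi = -\<infinity>))"
      using Pfin enn2ereal_nonneg[of P] by auto
  qed simp
  moreover have "ext_expectation N X = enn2ereal P - enn2ereal Qi"
    unfolding ext_expectation_def P_def Qi_def ..
  ultimately show ?thesis using eq by simp
qed




lemma gen_sigma_sub:
  assumes "\<And>i. i \<in> I \<Longrightarrow> Xs i \<in> borel_measurable M"
  shows "subalgebra M (gen_sigma M Xs I)"
proof -
  define G where "G = (\<Union>i\<in>I. sets (vimage_algebra (space M) (Xs i) borel))"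
  have GM: "G \<subseteq> sets M"
  proof
    fix B assume "B \<in> G"
    then obtain i where i: "i \<in> I" "B \<in> sets (vimage_algebra (space M) (Xs i) borel)" by (auto simp: G_def)
    then obtain A where "A \<in> sets borel" "B = Xs i -` A \<inter> space M"
      by (auto simp: sets_vimage_algebra2)
    then show "B \<in> sets M" using assms[OF i(1)] by (auto intro: measurable_sets)
  qed
  then have GP: "G \<subseteq> Pow (space M)" using sets.sets_into_space by blast
  have "space (gen_sigma M Xs I) = space M"
    unfolding gen_sigma_def G_def[symmetric] by (simp add: space_measure_of_conv)
  moreover have "sets (gen_sigma M Xs I) \<subseteq> sets M"
    unfolding gen_sigma_def G_def[symmetric] using GP GM
    by (simp add: sets_measure_of sets.sigma_sets_subset)
  ultimately show ?thesis by (simp add: subalgebra_def)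
qed

lemma uncond:
  assumes "prob_space M" "subalgebra M F" and E[measurable]: "E \<in> sets M"
    and le: "AE \<omega> in M. cond_prob M F E \<omega> \<le> p"
  shows "measure M E \<le> p"
proof -
  interpret prob_space M by fact
  interpret finite_measure_subalgebra M F
    by unfold_locales (use assms(2) in auto)
  have int: "integrable M (indicator E :: 'a \<Rightarrow> real)" by (simp add: emeasure_eq_measure)
  have "measure M E = (\<integral>\<omega>. indicator E \<omega> \<partial>M)" by simp
  also have "\<dots> = (\<integral>\<omega>. real_cond_exp M F (indicator E) \<omega> \<partial>M)"
    using real_cond_exp_int(2)[OF int] by simp
  also have "\<dots> \<le> (\<integral>\<omega>. p \<partial>M)"
    using le real_cond_exp_int(1)[OF int] by (intro integral_mono_AE) (auto simp: cond_prob_def)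
  also have "\<dots> = p" by (simp add: prob_space)
  finally show ?thesis .
qed

lemma int_max:
  assumes "prob_space N" and [measurable]: "X \<in> borel_measurable N"
    and P: "(\<integral>\<^sup>+ x. ennreal (max 0 (X x)) \<partial>N) < \<infinity>"
  shows "integrable N (\<lambda>x. max (X x) c)"
proof -
  interpret N: prob_space N by fact
  have intP: "integrable N (\<lambda>x. max 0 (X x))"
    by (rule integrableI_bounded) (use P in auto)
  show ?thesis
  proof (rule Bochner_Integration.integrable_bound[OF Bochner_Integration.integrable_add[OF intP N.integrable_const[of "\<bar>c\<bar>"]]])
    show "AE x in N. norm (max (X x) c) \<le> norm (max 0 (X x) + \<bar>c\<bar>)" by auto
  qed measurable
qed

theorem theorem3p5:
  fixes M :: "'a measure" and N :: "'b measure"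
    and Xs :: "nat \<Rightarrow> 'a \<Rightarrow> real" and X :: "'b \<Rightarrow> real"
  assumes "prob_space M" and "prob_space N"
    and indep: "prob_space.indep_vars M (\<lambda>_. borel) Xs {1..}"
    and X_rv: "X \<in> borel_measurable N"
    and X_pos: "(\<integral>\<^sup>+ x. ennreal (max 0 (X x)) \<partial>N) < \<infinity>"
    and dom: "\<And>n (s::ereal). n \<ge> 1 \<Longrightarrow>
       AE \<omega> in M. cond_prob M (gen_sigma M Xs {1..<n}) {\<omega>\<in>space M. ereal (Xs n \<omega>) \<ge> s} \<omega>
                   \<le> measure N {x\<in>space N. ereal (X x) > s}"
  shows "AE \<omega> in M. limsup (\<lambda>n. ereal ((\<Sum>i=1..n. Xs i \<omega>) / real n)) \<le> ext_expectation N X"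
proof -
  interpret M: prob_space M by fact
  interpret N: prob_space N by fact
  have Xm[measurable]: "\<And>i. 1 \<le> i \<Longrightarrow> Xs i \<in> borel_measurable M"
    using indep unfolding M.indep_vars_def by auto
  note X_rv[measurable]
  have tail: "M.prob {\<omega>\<in>space M. s \<le> Xs n \<omega>} \<le> N.prob {x\<in>space N. s < X x}" if n: "1 \<le> n" for n s
  proof -
    have "measure M {\<omega>\<in>space M. ereal (Xs n \<omega>) \<ge> ereal s} \<le> measure N {x\<in>space N. ereal (X x) > ereal s}"
    proof (rule uncond[OF assms(1) gen_sigma_sub])
      show "\<And>i. i \<in> {1..<n} \<Longrightarrow> Xs i \<in> borel_measurable M" by auto
      show "{\<omega>\<in>space M. ereal (Xs n \<omega>) \<ge> ereal s} \<in> sets M" using n by measurable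
    qed (rule dom[OF n])
    then show ?thesis by simp
  qed
  have step: "AE \<omega> in M. \<forall>d>0. eventually (\<lambda>n. (\<Sum>j=1..n. Xs j \<omega>) / real n \<le> (\<integral>x. max (X x) c \<partial>N) + d) sequentially"
    for c :: real
  proof -
    have intc: "integrable N (\<lambda>x. max (X x) c)" by (rule int_max[OF assms(2) X_rv X_pos])
    interpret C: core M N "\<lambda>j \<omega>. max (Xs j \<omega>) c - c" "\<lambda>x. max (X x) c - c"
    proof unfold_locales
      show "M.indep_vars (\<lambda>_. borel) (\<lambda>j \<omega>. max (Xs j \<omega>) c - c) {1..}"
        using M.indep_vars_compose2[OF indep, of "\<lambda>_ y. max y c - c" "\<lambda>_. borel"] by simp
      show "integrable N (\<lambda>x. max (X x) c - c)" using intc by auto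
      fix j :: nat and t :: real assume j: "1 \<le> j" and t: "0 < t"
      have "emeasure M {\<omega>\<in>space M. t \<le> max (Xs j \<omega>) c - c} = ennreal (M.prob {\<omega>\<in>space M. t + c \<le> Xs j \<omega>})"
      proof -
        have "{\<omega>\<in>space M. t \<le> max (Xs j \<omega>) c - c} = {\<omega>\<in>space M. t + c \<le> Xs j \<omega>}"
          using t by (auto simp: max_def)
        then show ?thesis by (simp add: M.emeasure_eq_measure)
      qed
      also have "\<dots> \<le> ennreal (N.prob {x\<in>space N. t + c < X x})"
        using tail[OF j] by (intro ennreal_leI)
      also have "\<dots> \<le> ennreal (N.prob {x\<in>space N. t \<le> max (X x) c - c})"
        by (intro ennreal_leI N.finite_measure_mono) (auto simp: max_def)
      also have "\<dots> = emeasure N {x\<in>space N. t \<le> max (X x) c - c}"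
        by (simp add: N.emeasure_eq_measure)
      finally show "emeasure M {\<omega>\<in>space M. t \<le> max (Xs j \<omega>) c - c} \<le> emeasure N {x\<in>space N. t \<le> max (X x) c - c}" .
    qed auto
    have EZ: "(\<integral>x. max (X x) c - c \<partial>N) = (\<integral>x. max (X x) c \<partial>N) - c"
      using intc by (simp add: N.prob_space)
    show ?thesis using C.core_main
    proof eventually_elim
      fix \<omega> assume H: "\<forall>d>0. eventually (\<lambda>n. (\<Sum>j=1..n. max (Xs j \<omega>) c - c) / real n \<le> (\<integral>x. max (X x) c - c \<partial>N) + d) sequentially"
      show "\<forall>d>0. eventually (\<lambda>n. (\<Sum>j=1..n. Xs j \<omega>) / real n \<le> (\<integral>x. max (X x) c \<partial>N) + d) sequentially"
      proof (intro allI impI)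
        fix d :: real assume d: "d > 0"
        show "eventually (\<lambda>n. (\<Sum>j=1..n. Xs j \<omega>) / real n \<le> (\<integral>x. max (X x) c \<partial>N) + d) sequentially"
          using H[rule_format, OF d] eventually_ge_at_top[of "1::nat"]
        proof eventually_elim
          fix n :: nat assume h: "(\<Sum>j=1..n. max (Xs j \<omega>) c - c) / real n \<le> (\<integral>x. max (X x) c - c \<partial>N) + d"
            and n: "1 \<le> n"
          have "(\<Sum>j=1..n. Xs j \<omega>) \<le> (\<Sum>j=1..n. max (Xs j \<omega>) c - c) + real n * c"
            by (simp add: sum_subtractf sum_mono)
          then have "(\<Sum>j=1..n. Xs j \<omega>) / real n \<le> (\<Sum>j=1..n. max (Xs j \<omega>) c - c) / real n + c"
            using n by (simp add: field_simps)
          then show "(\<Sum>j=1..n. Xs j \<omega>) / real n \<le> (\<integral>x. max (X x) c \<partial>N) + d"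
            using h EZ by linarith
        qed
      qed
    qed
  qed
  have "AE \<omega> in M. \<forall>k::nat. \<forall>d>0. eventually (\<lambda>n. (\<Sum>j=1..n. Xs j \<omega>) / real n \<le> (\<integral>x. max (X x) (- real k) \<partial>N) + d) sequentially"
    unfolding AE_all_countable using step by blast
  then show ?thesis
  proof eventually_elim
    fix \<omega> assume H: "\<forall>k::nat. \<forall>d>0. eventually (\<lambda>n. (\<Sum>j=1..n. Xs j \<omega>) / real n \<le> (\<integral>x. max (X x) (- real k) \<partial>N) + d) sequentially"
    have bnd: "limsup (\<lambda>n. ereal ((\<Sum>i=1..n. Xs i \<omega>) / real n)) \<le> ereal (\<integral>x. max (X x) (- real k) \<partial>N)" for k :: nat
    proof (rule ereal_le_epsilon2)
      fix e :: real assume e: "0 < e"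
      have "limsup (\<lambda>n. ereal ((\<Sum>i=1..n. Xs i \<omega>) / real n)) \<le> ereal ((\<integral>x. max (X x) (- real k) \<partial>N) + e)"
        by (rule Limsup_bounded) (use H[rule_format, OF e, of k] in eventually_elim, simp)
      then show "limsup (\<lambda>n. ereal ((\<Sum>i=1..n. Xs i \<omega>) / real n)) \<le> ereal (\<integral>x. max (X x) (- real k) \<partial>N) + ereal e"
        by simp
    qed
    show "limsup (\<lambda>n. ereal ((\<Sum>i=1..n. Xs i \<omega>) / real n)) \<le> ext_expectation N X"
      by (rule LIMSEQ_le_const[OF ext_lim[OF assms(2) X_rv X_pos]]) (use bnd in auto)
  qed
qed


end
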